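(* The short exact sequence $1\to\mathrm{Sym}(Z)\to\tilde QV\xrightarrow{\pi} V\to 1$ splits.
   Context: Let $\{0,1\}^*$ be the finite words over $\{0,1\}$, the vertices of the rooted binary tree in which $x$ has children $x0$ and $x1$ (two edge colours), and let $Z=\{0,1\}^*\cup\{\zeta\}$ with $\zeta$ an extra isolated vertex. $\tilde QV$ is the group of bijections $\tau$ of $Z$ with $\tau(x0)=\tau(x)0$ and $\tau(x1)=\tau(x)1$ for all but finitely many $x\in\{0,1\}^*$. Each such $\tau$ induces a homeomorphism $\pi(\tau)$ of $\{0,1\}^{\mathbb N}$ by $\pi(\tau)(\ell\omega)=\tau(\ell)\omega$, for $\ell$ in a finite maximal prefix-antichain $L$ with $\tau(\ell s)=\tau(\ell)s$ for all $\ell\in L$ and words $s$; this gives a surjective homomorphism $\pi$ onto Thompson's group $V$ whose kernel is $\mathrm{Sym}(Z)$, the group of finitely supported permutations of $Z$. *)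

theory Defs
  imports "HOL-Algebra.Group" "HOL-Library.Sublist"
begin

text \<open>Vertices of the rooted binary tree: finite words over bool (False = 0, True = 1);
  the children of x are x@[False] and x@[True].  Z = words plus an extra isolated vertex
  zeta, modelled as bool list option with None = zeta.\<close>

type_synonym vertex = "bool list"
type_synonym Zset = "bool list option"
type_synonym cantor = "nat \<Rightarrow> bool"

definition zeta :: Zset where "zeta = None"

definition respects_at :: "(Zset \<Rightarrow> Zset) \<Rightarrow> vertex \<Rightarrow> bool" where
  "respects_at \<tau> x \<longleftrightarrow> (\<exists>w. \<tau> (Some x) = Some w \<and>
      \<tau> (Some (x @ [False])) = Some (w @ [False]) \<and>
      \<tau> (Some (x @ [True])) = Some (w @ [True]))"

definition QVt_set :: "(Zset \<Rightarrow> Zset) set" where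
  "QVt_set = {\<tau>. bij \<tau> \<and> finite {x. \<not> respects_at \<tau> x}}"

definition QVt :: "(Zset \<Rightarrow> Zset) monoid" where
  "QVt = \<lparr>carrier = QVt_set, mult = (\<lambda>f g. f \<circ> g), one = id\<rparr>"

definition conc :: "bool list \<Rightarrow> cantor \<Rightarrow> cantor" where
  "conc w \<omega> = (\<lambda>i. if i < length w then w ! i else \<omega> (i - length w))"

definition pref :: "nat \<Rightarrow> cantor \<Rightarrow> bool list" where
  "pref n \<omega> = map \<omega> [0..<n]"

definition shift :: "nat \<Rightarrow> cantor \<Rightarrow> cantor" where
  "shift n \<omega> = (\<lambda>i. \<omega> (i + n))"

definition pi :: "(Zset \<Rightarrow> Zset) \<Rightarrow> cantor \<Rightarrow> cantor" where
  "pi \<tau> \<omega> = (THE \<eta>. \<exists>n w. \<tau> (Some (pref n \<omega>)) = Some w \<and>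
       (\<forall>s. \<tau> (Some (pref n \<omega> @ s)) = Some (w @ s)) \<and> \<eta> = conc w (shift n \<omega>))"

definition max_antichain :: "vertex set \<Rightarrow> bool" where
  "max_antichain L \<longleftrightarrow> finite L \<and>
     (\<forall>a\<in>L. \<forall>b\<in>L. prefix a b \<longrightarrow> a = b) \<and>
     (\<forall>x. \<exists>l\<in>L. prefix l x \<or> prefix x l)"

definition V_set :: "(cantor \<Rightarrow> cantor) set" where
  "V_set = {f. \<exists>L L' \<phi>. max_antichain L \<and> max_antichain L' \<and> bij_betw \<phi> L L' \<and>
      (\<forall>l\<in>L. \<forall>\<omega>. f (conc l \<omega>) = conc (\<phi> l) \<omega>)}"

definition V :: "(cantor \<Rightarrow> cantor) monoid" where
  "V = \<lparr>carrier = V_set, mult = (\<lambda>f g. f \<circ> g), one = id\<rparr>"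

end

theory Submission
  imports Defs
begin

lemma length_pref[simp]: "length (pref n \<omega>) = n"
  by (simp add: pref_def)

lemma pref_conc[simp]: "pref (length w) (conc w \<omega>) = w"
proof -
  have "map (conc w \<omega>) [0..<length w] = map (nth w) [0..<length w]"
    by (rule map_cong) (auto simp: conc_def)
  then show ?thesis by (simp add: pref_def map_nth)
qed

lemma shift_conc[simp]: "shift (length w) (conc w \<omega>) = \<omega>"
  by (simp add: shift_def conc_def)

lemma conc_append: "conc (a @ b) \<omega> = conc a (conc b \<omega>)"
  by (auto simp: conc_def nth_append fun_eq_iff)

lemma conc_pref_shift: "conc (pref n \<omega>) (shift n \<omega>) = \<omega>"
  by (auto simp: conc_def pref_def shift_def fun_eq_iff)

lemma take_pref: "k \<le> n \<Longrightarrow> take k (pref n \<omega>) = pref k \<omega>"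
  by (simp add: pref_def take_map)

lemma drop_pref_conc: "n \<le> N \<Longrightarrow> conc (drop n (pref N \<omega>)) (shift N \<omega>) = shift n \<omega>"
  by (auto simp: conc_def pref_def shift_def fun_eq_iff add.commute)

definition lp :: "bool list \<Rightarrow> cantor \<Rightarrow> bool" where
  "lp l \<omega> \<longleftrightarrow> pref (length l) \<omega> = l"

lemma lp_conc: "lp l \<omega> \<Longrightarrow> \<omega> = conc l (shift (length l) \<omega>)"
  unfolding lp_def using conc_pref_shift[of "length l" \<omega>] by simp

lemma lp_unique:
  assumes "max_antichain L" "a \<in> L" "b \<in> L" "lp a \<omega>" "lp b \<omega>" shows "a = b"
proof -
  have ac: "\<forall>a\<in>L. \<forall>b\<in>L. prefix a b \<longrightarrow> a = b" using assms(1) by (simp add: max_antichain_def)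
  have "prefix a b \<or> prefix b a"
  proof (cases "length a \<le> length b")
    case True
    have "a = take (length a) b" using assms(4,5) take_pref[OF True, of \<omega>]
      by (simp add: lp_def)
    then show ?thesis using take_is_prefix[of "length a" b] by simp
  next
    case False
    then have F: "length b \<le> length a" by simp
    have "b = take (length b) a" using assms(4,5) take_pref[OF F, of \<omega>]
      by (simp add: lp_def)
    then show ?thesis using take_is_prefix[of "length b" a] by simp
  qed
  then show ?thesis using ac assms(2,3) by blast
qed

lemma antichain_long:
  assumes "max_antichain L" "length x \<ge> Max (length ` L)"
  shows "\<exists>l\<in>L. prefix l x"
proof -
  have fin: "finite L" using assms(1) by (simp add: max_antichain_def)
  obtain l where l: "l \<in> L" "prefix l x \<or> prefix x l" using assms(1) unfolding max_antichain_def by blast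
  have ll: "length l \<le> Max (length ` L)" using fin l(1) by (intro Max_ge) auto
  show ?thesis
  proof (cases "prefix l x")
    case True then show ?thesis using l(1) by blast
  next
    case False
    then have px: "prefix x l" using l(2) by blast
    then have "length x \<le> length l" by (rule prefix_length_le)
    then have "length x = length l" using ll assms(2) by linarith
    then have "x = l" using px by (auto simp: prefix_def)
    then show ?thesis using l(1) by blast
  qed
qed

lemma lp_exists:
  assumes "max_antichain L" shows "\<exists>l\<in>L. lp l \<omega>"
proof -
  obtain l where l: "l \<in> L" "prefix l (pref (Max (length ` L)) \<omega>)"
    using antichain_long[OF assms, of "pref (Max (length ` L)) \<omega>"] by auto
  have 1: "l = take (length l) (pref (Max (length ` L)) \<omega>)" using l(2)
    by (auto simp: prefix_def)
  have 2: "length l \<le> Max (length ` L)" using prefix_length_le[OF l(2)] by simp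
  have "lp l \<omega>" using 1 take_pref[OF 2, of \<omega>] by (simp add: lp_def)
  then show ?thesis using l by blast
qed

definition E :: "cantor set" where "E = {\<omega>. \<exists>n. \<forall>i\<ge>n. \<not> \<omega> i}"

lemma E_conc: "\<omega> \<in> E \<Longrightarrow> conc w \<omega> \<in> E"
  unfolding E_def conc_def
  apply clarify
  subgoal for n by (rule exI[of _ "n + length w"]) auto
  done

lemma E_shift: "\<omega> \<in> E \<Longrightarrow> shift k \<omega> \<in> E"
  unfolding E_def shift_def
  apply clarify
  subgoal for n by (rule exI[of _ n]) auto
  done

definition zs :: cantor where "zs = (\<lambda>_. False)"

definition pz :: "Zset \<Rightarrow> cantor" where
  "pz z = (case z of None \<Rightarrow> zs | Some x \<Rightarrow> conc (x @ [True]) zs)"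

lemma pz_Some_at: "pz (Some x) (length x) = True"
  by (simp add: pz_def conc_def)

lemma pz_Some_after: "i > length x \<Longrightarrow> pz (Some x) i = False"
  by (simp add: pz_def conc_def zs_def)

lemma pz_None_Some: "pz None \<noteq> pz (Some y)"
proof
  assume eq: "pz None = pz (Some y)"
  have "pz (Some y) (length y) = True" using pz_Some_at by simp
  moreover have "pz None (length y) = False" by (simp add: pz_def zs_def)
  ultimately show False using eq by simp
qed

lemma pz_lt: "length x < length y \<Longrightarrow> pz (Some x) \<noteq> pz (Some y)"
proof
  assume lt: "length x < length y" and eq: "pz (Some x) = pz (Some y)"
  have "pz (Some y) (length y) = True" using pz_Some_at by simp
  moreover have "pz (Some x) (length y) = False" using pz_Some_after[OF lt] by simp
  ultimately show False using eq by simp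
qed

lemma pref_pz: "pref (length x) (pz (Some x)) = x"
  by (simp add: pz_def conc_append)

lemma pz_Some_inj: "pz (Some x) = pz (Some y) \<Longrightarrow> x = y"
proof -
  assume eq: "pz (Some x) = pz (Some y)"
  have "length x = length y"
    using pz_lt[of x y] pz_lt[of y x] eq by (metis linorder_neqE_nat)
  then show "x = y" using pref_pz[of x] pref_pz[of y] eq by metis
qed

lemma inj_pz: "inj pz"
proof (rule injI)
  fix a b assume eq: "pz a = pz b"
  show "a = b"
    using eq pz_None_Some pz_Some_inj by (cases a; cases b) (auto, metis)
qed

lemma E_range: "\<omega> \<in> E \<Longrightarrow> \<omega> \<in> range pz"
proof -
  assume "\<omega> \<in> E"
  then obtain n where n: "\<forall>i\<ge>n. \<not> \<omega> i" by (auto simp: E_def)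
  show ?thesis
  proof (cases "\<exists>i. \<omega> i")
    case False
    then have "\<omega> = pz None" by (auto simp: pz_def zs_def fun_eq_iff)
    then show ?thesis by blast
  next
    case True
    let ?S = "{i. \<omega> i}"
    have fin: "finite ?S" using n by (metis (mono_tags) finite_nat_set_iff_bounded mem_Collect_eq not_le)
    define m where "m = Max ?S"
    have m1: "\<omega> m" using True fin Max_in m_def by fastforce
    have m2: "\<And>i. i > m \<Longrightarrow> \<not> \<omega> i" using fin m_def by (metis Max_ge leD mem_Collect_eq)
    have "\<omega> i = pz (Some (pref m \<omega>)) i" for i
    proof -
      have "i < m \<or> i = m \<or> i > m" by arith
      then show ?thesis
        by (elim disjE) (auto simp: pz_def conc_def pref_def zs_def nth_append m1 m2)
    qed
    then have "\<omega> = pz (Some (pref m \<omega>))" by blast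
    then show ?thesis by blast
  qed
qed

lemma zs_E: "zs \<in> E"
  by (auto simp: E_def zs_def)

lemma pz_E: "pz z \<in> E"
proof (cases z)
  case None then show ?thesis using zs_E by (simp add: pz_def)
next
  case (Some x) then show ?thesis using zs_E E_conc by (simp add: pz_def)
qed

definition sec :: "(cantor \<Rightarrow> cantor) \<Rightarrow> Zset \<Rightarrow> Zset" where
  "sec g = (\<lambda>z. inv_into UNIV pz (g (pz z)))"

locale vrep =
  fixes f L L' \<phi>
  assumes L: "max_antichain L" and L': "max_antichain L'" and bj: "bij_betw \<phi> L L'"
    and act: "\<forall>l\<in>L. \<forall>\<omega>. f (conc l \<omega>) = conc (\<phi> l) \<omega>"
begin

lemma decomp: "\<exists>l\<in>L. \<omega> = conc l (shift (length l) \<omega>)"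
  using lp_exists[OF L] lp_conc by blast

lemma f_E: "\<omega> \<in> E \<Longrightarrow> f \<omega> \<in> E"
proof -
  assume "\<omega> \<in> E"
  obtain l where "l \<in> L" "\<omega> = conc l (shift (length l) \<omega>)" using decomp by blast
  then have "f \<omega> = conc (\<phi> l) (shift (length l) \<omega>)" using act by metis
  then show ?thesis using E_conc E_shift \<open>\<omega> \<in> E\<close> by simp
qed

lemma f_surj: "\<eta> \<in> E \<Longrightarrow> \<exists>\<omega>\<in>E. f \<omega> = \<eta>"
proof -
  assume "\<eta> \<in> E"
  obtain l' where l': "l' \<in> L'" "lp l' \<eta>" using lp_exists[OF L'] by blast
  define l where "l = inv_into L \<phi> l'"
  have l: "l \<in> L" "\<phi> l = l'" using bj l'(1) unfolding l_def
    by (auto simp: bij_betw_def inv_into_into f_inv_into_f)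
  define \<omega> where "\<omega> = conc l (shift (length l') \<eta>)"
  have "f \<omega> = \<eta>" using act l lp_conc[OF l'(2)] unfolding \<omega>_def by metis
  moreover have "\<omega> \<in> E" unfolding \<omega>_def using E_conc E_shift \<open>\<eta> \<in> E\<close> by blast
  ultimately show ?thesis by blast
qed

lemma f_inj: "inj f"
proof (rule injI)
  fix a b assume eq: "f a = f b"
  obtain l1 where l1: "l1 \<in> L" "a = conc l1 (shift (length l1) a)" using decomp by blast
  obtain l2 where l2: "l2 \<in> L" "b = conc l2 (shift (length l2) b)" using decomp by blast
  have fa: "f a = conc (\<phi> l1) (shift (length l1) a)" using act l1 by metis
  have fb: "f b = conc (\<phi> l2) (shift (length l2) b)" using act l2 by metis
  have "lp (\<phi> l1) (f a)" using fa by (simp add: lp_def)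
  moreover have "lp (\<phi> l2) (f a)" using fb eq by (simp add: lp_def)
  moreover have "\<phi> l1 \<in> L'" "\<phi> l2 \<in> L'" using bj l1 l2 by (auto simp: bij_betw_def)
  ultimately have "\<phi> l1 = \<phi> l2" using lp_unique[OF L'] by metis
  then have "l1 = l2" using bj l1 l2 by (auto simp: bij_betw_def inj_on_def)
  moreover have "shift (length (\<phi> l1)) (f a) = shift (length (\<phi> l2)) (f b)" using eq \<open>\<phi> l1 = \<phi> l2\<close> by simp
  then have "shift (length l1) a = shift (length l2) b" using fa fb by simp
  ultimately show "a = b" using l1 l2 by metis
qed

lemma sec_Some: "l \<in> L \<Longrightarrow> sec f (Some (l @ t)) = Some (\<phi> l @ t)"
proof -
  assume l: "l \<in> L"
  have "pz (Some (l @ t)) = conc l (conc (t @ [True]) zs)" by (simp add: pz_def conc_append)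
  then have "f (pz (Some (l @ t))) = conc (\<phi> l) (conc (t @ [True]) zs)" using act l by simp
  also have "\<dots> = pz (Some (\<phi> l @ t))" by (simp add: pz_def conc_append)
  finally show ?thesis unfolding sec_def using inj_pz by simp
qed

lemma sec_bij: "bij (sec f)"
proof (rule bijI)
  show "inj (sec f)"
  proof (rule injI)
    fix a b assume "sec f a = sec f b"
    then have "inv_into UNIV pz (f (pz a)) = inv_into UNIV pz (f (pz b))" by (simp add: sec_def)
    moreover have "f (pz a) \<in> range pz" "f (pz b) \<in> range pz" using f_E pz_E E_range by auto
    ultimately have "f (pz a) = f (pz b)" by (metis f_inv_into_f)
    then show "a = b" using f_inj inj_pz by (auto dest: injD)
  qed
  show "surj (sec f)"
    unfolding surj_def
  proof
    fix z
    obtain \<omega> where w: "\<omega> \<in> E" "f \<omega> = pz z" using f_surj pz_E by blast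
    then obtain z' where "\<omega> = pz z'" using E_range by blast
    then have "sec f z' = z" using w inj_pz by (simp add: sec_def)
    then show "\<exists>z'. z = sec f z'" by metis
  qed
qed

lemma sec_QV: "sec f \<in> QVt_set"
proof -
  let ?M = "Max (length ` L)"
  have "{x. \<not> respects_at (sec f) x} \<subseteq> {xs. set xs \<subseteq> UNIV \<and> length xs \<le> ?M}"
  proof (clarsimp)
    fix x assume nr: "\<not> respects_at (sec f) x"
    show "length x \<le> ?M"
    proof (rule ccontr)
      assume "\<not> length x \<le> ?M"
      then obtain l where "l \<in> L" "prefix l x" using antichain_long[OF L, of x] by auto
      then obtain t where "x = l @ t" "l \<in> L" by (auto simp: prefix_def)
      then have "respects_at (sec f) x" unfolding respects_at_def
        using sec_Some[of l] by (metis append.assoc)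
      then show False using nr by simp
    qed
  qed
  moreover have "finite {xs. set xs \<subseteq> (UNIV::bool set) \<and> length xs \<le> ?M}"
    by (rule finite_lists_length_le) simp
  ultimately show ?thesis using sec_bij by (auto simp: QVt_set_def intro: finite_subset)
qed

lemma pi_sec: "pi (sec f) \<omega> = f \<omega>"
  unfolding pi_def
proof (rule the_equality)
  obtain l where l: "l \<in> L" "lp l \<omega>" using lp_exists[OF L] by blast
  have "f \<omega> = conc (\<phi> l) (shift (length l) \<omega>)" using act l lp_conc by metis
  then show "\<exists>n w. sec f (Some (pref n \<omega>)) = Some w \<and>
       (\<forall>s. sec f (Some (pref n \<omega> @ s)) = Some (w @ s)) \<and> f \<omega> = conc w (shift n \<omega>)"
    using l sec_Some[of l "[]"] sec_Some[of l] unfolding lp_def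
    by (intro exI[of _ "length l"] exI[of _ "\<phi> l"]) auto
next
  fix \<eta> assume "\<exists>n w. sec f (Some (pref n \<omega>)) = Some w \<and>
       (\<forall>s. sec f (Some (pref n \<omega> @ s)) = Some (w @ s)) \<and> \<eta> = conc w (shift n \<omega>)"
  then obtain n w where h: "\<forall>s. sec f (Some (pref n \<omega> @ s)) = Some (w @ s)"
    and eta: "\<eta> = conc w (shift n \<omega>)" by blast
  obtain l where l: "l \<in> L" "lp l \<omega>" using lp_exists[OF L] by blast
  define N where "N = n + length l"
  define s0 where "s0 = drop n (pref N \<omega>)"
  define t where "t = drop (length l) (pref N \<omega>)"
  have p1: "pref N \<omega> = pref n \<omega> @ s0" unfolding s0_def N_def
    by (metis append_take_drop_id le_add1 take_pref)
  have p2: "pref N \<omega> = l @ t" unfolding t_def N_def using l(2)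
    by (metis append_take_drop_id le_add2 lp_def take_pref)
  have "Some (w @ s0) = Some (\<phi> l @ t)" using h sec_Some[OF l(1), of t] p1 p2 by metis
  then have ws: "w @ s0 = \<phi> l @ t" by simp
  have "f \<omega> = conc (\<phi> l) (shift (length l) \<omega>)" using act l lp_conc by metis
  also have "shift (length l) \<omega> = conc t (shift N \<omega>)" unfolding t_def
    by (simp add: N_def drop_pref_conc)
  also have "conc (\<phi> l) (conc t (shift N \<omega>)) = conc (w @ s0) (shift N \<omega>)"
    by (simp add: ws conc_append)
  also have "\<dots> = conc w (shift n \<omega>)" unfolding s0_def
    by (simp add: conc_append N_def drop_pref_conc)
  finally show "\<eta> = f \<omega>" using eta by simp
qed

end

lemma V_vrep: "f \<in> V_set \<Longrightarrow> \<exists>L L' \<phi>. vrep f L L' \<phi>"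
  unfolding V_set_def vrep_def by blast

lemma sec_E: "f \<in> V_set \<Longrightarrow> \<omega> \<in> E \<Longrightarrow> f \<omega> \<in> E"
  using V_vrep vrep.f_E by blast

lemma sec_QV': "g \<in> V_set \<Longrightarrow> sec g \<in> QVt_set"
proof -
  assume "g \<in> V_set"
  then obtain L L' \<phi> where "vrep g L L' \<phi>" using V_vrep by blast
  then show ?thesis by (rule vrep.sec_QV)
qed

lemma pi_sec': "g \<in> V_set \<Longrightarrow> pi (sec g) = g"
proof -
  assume "g \<in> V_set"
  then obtain L L' \<phi> where "vrep g L L' \<phi>" using V_vrep by blast
  then show ?thesis using vrep.pi_sec by blast
qed

lemma sec_comp: "h \<in> V_set \<Longrightarrow> sec (g \<circ> h) = sec g \<circ> sec h"
proof
  fix z assume h: "h \<in> V_set"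
  have "h (pz z) \<in> range pz" using h sec_E pz_E E_range by blast
  then have "pz (inv_into UNIV pz (h (pz z))) = h (pz z)" by (rule f_inv_into_f)
  then show "sec (g \<circ> h) z = (sec g \<circ> sec h) z" by (simp add: sec_def)
qed

theorem lemma2p3:
  shows "\<exists>s \<in> hom V QVt. \<forall>g \<in> carrier V. pi (s g) = g"
proof (rule bexI[of _ sec])
  show "\<forall>g \<in> carrier V. pi (sec g) = g"
    using pi_sec' by (simp add: V_def)
  show "sec \<in> hom V QVt"
  proof (rule homI)
    fix g assume "g \<in> carrier V"
    then show "sec g \<in> carrier QVt" using sec_QV' by (simp add: V_def QVt_def)
  next
    fix g h assume g: "g \<in> carrier V" and h: "h \<in> carrier V"
    then show "sec (g \<otimes>\<^bsub>V\<^esub> h) = sec g \<otimes>\<^bsub>QVt\<^esub> sec h"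
      using sec_comp by (simp add: V_def QVt_def)
  qed
qed

end
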